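(* Let $F\ge1$, $N_{\max}\ge1$, and let $\mathcal{L}$ be the collection of local environments with at most $N_{\max}$ elements. For $o\in\mathrm{O}(3)$ and $\mathrm{LE}\in\mathcal{L}$ put $o(\mathrm{LE})=\{(s,xo^T):(s,x)\in\mathrm{LE}\}$; call $g:\mathcal{L}\to\mathbb{R}^{3\times3}$ $\mathrm{O}(3)$-equivariant if $g(o(\mathrm{LE}))=g(\mathrm{LE})o^T$ for all $o\in\mathrm{O}(3)$ and $\mathrm{LE}\in\mathcal{L}$. Then: (a) there exists an $\mathrm{O}(3)$-equivariant $g:\mathcal{L}\to\mathbb{R}^{3\times 3}$ such that, for every $\mathrm{LE}\in\mathcal{L}$, $g(\mathrm{LE})$ has full rank if and only if there is no $o\in\mathrm{O}(3)$ with $o\neq I$ and $o(\mathrm{LE})=\mathrm{LE}$; (b) for every $\mathrm{O}(3)$-equivariant $g:\mathcal{L}\to\mathbb{R}^{3\times 3}$ and every $\mathrm{LE}\in\mathcal{L}$, if $g(\mathrm{LE})$ has full rank then there is no $o\in\mathrm{O}(3)$, $o\ne I$, with $o(\mathrm{LE})=\mathrm{LE}$.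
   Context: A local environment is a finite set $\mathrm{LE}=\{(s_j,x_j)\}$ of pairs with $s_j\in\mathbb{R}^F$ (scalar atom features) and $x_j\in\mathbb{R}^{1\times 3}$ (relative positions of neighbours of a center atom). $\mathrm{O}(3)=\{Q\in\mathbb{R}^{3\times3}: QQ^T=I\}$ and $I$ is the $3\times3$ identity matrix. *)

theory Defs
  imports "HOL-Analysis.Analysis"
begin

text \<open>A local environment: a finite set of pairs (s, x), s a feature vector in R^F
  (index type 'f, F = CARD('f) \<ge> 1), x a row vector in R^{1x3} represented as real^3.\<close>

type_synonym 'f local_env = "((real^'f) \<times> (real^3)) set"

definition LEs :: "nat \<Rightarrow> 'f::finite local_env set" where
  "LEs Nmax = {LE. finite LE \<and> card LE \<le> Nmax}"

definition act :: "real^3^3 \<Rightarrow> 'f::finite local_env \<Rightarrow> 'f local_env" where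
  "act Q LE = (\<lambda>(s, x). (s, x v* transpose Q)) ` LE"

definition O3_equivariant :: "nat \<Rightarrow> ('f::finite local_env \<Rightarrow> real^3^3) \<Rightarrow> bool" where
  "O3_equivariant Nmax g \<longleftrightarrow>
     (\<forall>Q LE. orthogonal_matrix Q \<and> LE \<in> LEs Nmax \<longrightarrow> g (act Q LE) = g LE ** transpose Q)"

end

theory Submission
  imports Defs
begin

lemma act_comp: "act P (act Q LE) = act (P ** Q) LE"
  unfolding act_def image_comp
  by (rule image_cong) (auto simp: vector_matrix_mul_assoc[symmetric] matrix_transpose_mul simp del: transpose_matrix_vector)

lemma act_id[simp]: "act (mat 1) LE = LE"
  unfolding act_def by auto

lemma orth_tt: "orthogonal_matrix Q \<Longrightarrow> transpose Q ** Q = mat 1"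
  by (simp add: orthogonal_matrix_def)
lemma orth_tt2: "orthogonal_matrix Q \<Longrightarrow> Q ** transpose Q = mat 1"
  by (simp add: orthogonal_matrix_def)

lemma act_inv: "orthogonal_matrix Q \<Longrightarrow> act (transpose Q) (act Q LE) = LE"
  by (simp add: act_comp orth_tt)

lemma rank_orth: "orthogonal_matrix (Q::real^3^3) \<Longrightarrow> rank Q = 3"
proof -
  assume "orthogonal_matrix Q"
  then have "det Q \<noteq> 0" using det_orthogonal_matrix by fastforce
  then have "\<not> rank Q < 3" using det_eq_0_rank[of Q] by simp
  moreover have "rank Q \<le> 3" using rank_bound[of Q] by simp
  ultimately show ?thesis by simp
qed

definition stab :: "'f::finite local_env \<Rightarrow> bool" where
  "stab LE \<longleftrightarrow> (\<exists>Q. orthogonal_matrix Q \<and> Q \<noteq> mat 1 \<and> act Q LE = LE)"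

definition orbit :: "'f::finite local_env \<Rightarrow> 'f local_env set" where
  "orbit LE = {act Q LE | Q. orthogonal_matrix Q}"

definition rep :: "'f::finite local_env \<Rightarrow> 'f local_env" where
  "rep LE = (SOME R. R \<in> orbit LE)"

definition gg :: "'f::finite local_env \<Rightarrow> real^3^3" where
  "gg LE = (if stab LE then 0 else transpose (SOME Q. orthogonal_matrix Q \<and> act Q (rep LE) = LE))"

lemma orbit_act: "orthogonal_matrix P \<Longrightarrow> orbit (act P LE) = orbit LE"
proof -
  assume P: "orthogonal_matrix P"
  show ?thesis
  proof
    show "orbit (act P LE) \<subseteq> orbit LE"
      using P by (auto simp: orbit_def act_comp intro: orthogonal_matrix_mul)
    show "orbit LE \<subseteq> orbit (act P LE)"
    proof
      fix R assume "R \<in> orbit LE"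
      then obtain Q where Q: "orthogonal_matrix Q" "R = act Q LE" by (auto simp: orbit_def)
      have "R = act (Q ** transpose P) (act P LE)"
        using Q P by (simp add: act_comp matrix_mul_assoc[symmetric] orth_tt)
      moreover have "orthogonal_matrix (Q ** transpose P)" using Q P by (simp add: orthogonal_matrix_mul)
      ultimately show "R \<in> orbit (act P LE)" by (auto simp: orbit_def)
    qed
  qed
qed

lemma rep_in: "\<exists>Q. orthogonal_matrix Q \<and> act Q (rep LE) = LE"
proof -
  have "LE \<in> orbit LE" using orthogonal_matrix_id by (force simp: orbit_def)
  then have "rep LE \<in> orbit LE" unfolding rep_def by (rule someI)
  then obtain Q where Q: "orthogonal_matrix Q" "rep LE = act Q LE" by (auto simp: orbit_def)
  then show ?thesis by (intro exI[of _ "transpose Q"]) (simp add: act_inv)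
qed

lemma stab_act: "orthogonal_matrix P \<Longrightarrow> stab (act P LE) = stab LE"
proof -
  assume P: "orthogonal_matrix P"
  have *: "stab (act P L)" if "stab L" "orthogonal_matrix P" for L and P :: "real^3^3"
  proof -
    from that obtain Q where Q: "orthogonal_matrix Q" "Q \<noteq> mat 1" "act Q L = L" by (auto simp: stab_def)
    let ?R = "P ** Q ** transpose P"
    have "act ?R (act P L) = act P (act Q (act (transpose P ** P) L))"
      by (simp add: act_comp matrix_mul_assoc)
    also have "\<dots> = act P L" using Q that by (simp add: orth_tt)
    finally have a: "act ?R (act P L) = act P L" .
    have "?R \<noteq> mat 1"
    proof
      assume "?R = mat 1"
      then have "transpose P ** ?R ** P = mat 1" using that by (simp add: orth_tt)
      then have "Q = mat 1" using that by (simp add: matrix_mul_assoc orth_tt)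
        (metis matrix_mul_assoc matrix_mul_lid matrix_mul_rid orth_tt orth_tt2)
      with Q show False by simp
    qed
    moreover have "orthogonal_matrix ?R" using Q that by (simp add: orthogonal_matrix_mul)
    ultimately show ?thesis using a by (auto simp: stab_def)
  qed
  show ?thesis
  proof
    assume "stab (act P LE)"
    from *[OF this, of "transpose P"] P show "stab LE" by (simp add: act_inv)
  qed (rule *[OF _ P])
qed

lemma unique_Q:
  assumes "\<not> stab LE" "orthogonal_matrix Q" "act Q R = LE" "orthogonal_matrix Q'" "act Q' R = LE"
  shows "Q = Q'"
proof -
  have "R = act (transpose Q) LE" using assms act_inv by metis
  then have "act (Q' ** transpose Q) LE = LE" using assms by (simp add: act_comp[symmetric])
  moreover have "orthogonal_matrix (Q' ** transpose Q)" using assms by (simp add: orthogonal_matrix_mul)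
  ultimately have "Q' ** transpose Q = mat 1" using assms(1) by (auto simp: stab_def)
  then have "Q' ** transpose Q ** Q = Q" by simp
  then show ?thesis using assms by (simp add: matrix_mul_assoc[symmetric] orth_tt)
qed

lemma gg_equiv: "orthogonal_matrix P \<Longrightarrow> gg (act P LE) = gg LE ** transpose P"
proof -
  assume P: "orthogonal_matrix P"
  show ?thesis
  proof (cases "stab LE")
    case True then show ?thesis using P by (simp add: gg_def stab_act)
  next
    case False
    have rep_eq: "rep (act P LE) = rep LE" using P by (simp add: rep_def orbit_act)
    define Q where "Q = (SOME Q. orthogonal_matrix Q \<and> act Q (rep LE) = LE)"
    have Q: "orthogonal_matrix Q \<and> act Q (rep LE) = LE" unfolding Q_def using rep_in by (rule someI_ex)
    define Q2 where "Q2 = (SOME Q. orthogonal_matrix Q \<and> act Q (rep LE) = act P LE)"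
    have Q2: "orthogonal_matrix Q2 \<and> act Q2 (rep LE) = act P LE"
      unfolding Q2_def using rep_in[of "act P LE"] rep_eq by (metis (mono_tags, lifting) someI_ex)
    have ns: "\<not> stab (act P LE)" using False P stab_act by blast
    have "Q2 = P ** Q"
      by (rule unique_Q[OF ns]) (use Q Q2 P in \<open>auto simp: act_comp[symmetric] orthogonal_matrix_mul\<close>)
    then show ?thesis using False ns rep_eq
      by (simp add: gg_def Q_def[symmetric] Q2_def[symmetric] matrix_transpose_mul)
  qed
qed

lemma gg_rank: "rank (gg LE) = 3 \<longleftrightarrow> \<not> stab LE"
proof (cases "stab LE")
  case True then show ?thesis by (simp add: gg_def)
next
  case False
  have "orthogonal_matrix (SOME Q. orthogonal_matrix Q \<and> act Q (rep LE) = LE)"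
    using someI_ex[OF rep_in[of LE]] by blast
  then show ?thesis using False by (simp add: gg_def rank_orth)
qed

theorem theorem1:
  fixes Nmax :: nat
  assumes "Nmax \<ge> 1"
  shows "(\<exists>g :: 'f::finite local_env \<Rightarrow> real^3^3. O3_equivariant Nmax g \<and>
            (\<forall>LE \<in> LEs Nmax. rank (g LE) = 3 \<longleftrightarrow>
               \<not> (\<exists>Q. orthogonal_matrix Q \<and> Q \<noteq> mat 1 \<and> act Q LE = LE)))
       \<and> (\<forall>g :: 'f::finite local_env \<Rightarrow> real^3^3. O3_equivariant Nmax g \<longrightarrow>
            (\<forall>LE \<in> LEs Nmax. rank (g LE) = 3 \<longrightarrow>
               \<not> (\<exists>Q. orthogonal_matrix Q \<and> Q \<noteq> mat 1 \<and> act Q LE = LE)))"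
proof (intro conjI allI impI ballI)
  show "\<exists>g :: 'f::finite local_env \<Rightarrow> real^3^3. O3_equivariant Nmax g \<and>
            (\<forall>LE \<in> LEs Nmax. rank (g LE) = 3 \<longleftrightarrow>
               \<not> (\<exists>Q. orthogonal_matrix Q \<and> Q \<noteq> mat 1 \<and> act Q LE = LE))"
    by (rule exI[of _ gg]) (auto simp: O3_equivariant_def gg_equiv gg_rank stab_def)
next
  fix g :: "'f::finite local_env \<Rightarrow> real^3^3" and LE
  assume eq: "O3_equivariant Nmax g" and LE: "LE \<in> LEs Nmax" and r: "rank (g LE) = 3"
  show "\<not> (\<exists>Q. orthogonal_matrix Q \<and> Q \<noteq> mat 1 \<and> act Q LE = LE)"
  proof
    assume "\<exists>Q. orthogonal_matrix Q \<and> Q \<noteq> mat 1 \<and> act Q LE = LE"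
    then obtain Q where Q: "orthogonal_matrix Q" "Q \<noteq> mat 1" "act Q LE = LE" by blast
    have e: "g LE = g LE ** transpose Q" using eq Q LE unfolding O3_equivariant_def by metis
    have "det (g LE) \<noteq> 0" using det_eq_0_rank[of "g LE"] r by simp
    then have "invertible (g LE)" by (simp add: invertible_det_nz)
    then obtain B where B: "B ** g LE = mat 1" by (auto simp: invertible_left_inverse)
    have "B ** g LE = B ** g LE ** transpose Q" using e by (metis matrix_mul_assoc)
    then have "transpose Q = mat 1" using B by simp
    then have "Q = mat 1" by (metis transpose_mat transpose_transpose)
    with Q show False by simp
  qed
qed

end
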